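(* Let $r\ge2$, $\alpha_1,\dots,\alpha_r>0$, $(\mathbb{X},\mathcal{X})$ a Polish space and $H_0$ a probability measure on $\mathbb{X}$. Let $G_i=\sum_{k\ge1}W_{ik}\delta_{\tilde\varphi_{0k}}$, $i=1,\dots,r$, where $(\tilde\varphi_{0k})_{k\ge1}$ are i.i.d. with law $H_0$, independent of the weights, $W_{ik}=S_{ik}\prod_{j<k}(1-S_{ij})$, and the vectors $(S_{1k},\dots,S_{rk})$, $k\ge1$, are i.i.d. with $S_{ik}=V_{0k}V_{1k}\cdots V_{r-i,k}$, where $V_{0k},\dots,V_{r-1,k}$ are independent, $V_{0k}\sim Beta(1,\alpha_1)$ and $V_{mk}\sim Beta(1+\alpha_1+\dots+\alpha_m,\alpha_{m+1})$ for $m=1,\dots,r-1$. Then for every $1\le i<j\le r$ and every measurable $A\subseteq\mathbb{X}$ with $0<H_0(A)<1$, \[ \mathrm{Cor}(G_i(A),G_j(A))=\frac{2\sqrt{1+\alpha_1+\dots+\alpha_{r-i+1}}\;(1+\alpha_1+\dots+\alpha_{r-j+1})^{3/2}}{2(1+\alpha_1+\dots+\alpha_{r-j+1})^2+(2+\alpha_1+\dots+\alpha_{r-j+1})(\alpha_{r-j+2}+\dots+\alpha_{r-i+1})}. \]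
   Context: $\delta_x$ is the Dirac mass at $x$; empty products equal $1$. All measures $G_i$ share the same atoms $\tilde\varphi_{0k}$. *)

theory Defs
  imports "HOL-Probability.Probability"
begin

definition beta_density :: "real \<Rightarrow> real \<Rightarrow> real \<Rightarrow> real" where
  "beta_density a b x =
     (if 0 < x \<and> x < 1 then x powr (a - 1) * (1 - x) powr (b - 1) / Beta a b else 0)"

definition correlation :: "'a measure \<Rightarrow> ('a \<Rightarrow> real) \<Rightarrow> ('a \<Rightarrow> real) \<Rightarrow> real" where
  "correlation M X Y =
     (\<integral>\<omega>. (X \<omega> - (\<integral>\<omega>'. X \<omega>' \<partial>M)) * (Y \<omega> - (\<integral>\<omega>'. Y \<omega>' \<partial>M)) \<partial>M)
     / sqrt ((\<integral>\<omega>. (X \<omega> - (\<integral>\<omega>'. X \<omega>' \<partial>M))\<^sup>2 \<partial>M) * (\<integral>\<omega>. (Y \<omega> - (\<integral>\<omega>'. Y \<omega>' \<partial>M))\<^sup>2 \<partial>M))"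

definition stick_S :: "nat \<Rightarrow> (nat \<Rightarrow> nat \<Rightarrow> 'a \<Rightarrow> real) \<Rightarrow> nat \<Rightarrow> nat \<Rightarrow> 'a \<Rightarrow> real" where
  "stick_S r V i k \<omega> = (\<Prod>m\<in>{0..r - i}. V m k \<omega>)"

definition stick_W :: "nat \<Rightarrow> (nat \<Rightarrow> nat \<Rightarrow> 'a \<Rightarrow> real) \<Rightarrow> nat \<Rightarrow> nat \<Rightarrow> 'a \<Rightarrow> real" where
  "stick_W r V i k \<omega> = stick_S r V i k \<omega> * (\<Prod>j<k. 1 - stick_S r V i j \<omega>)"

definition G_meas :: "nat \<Rightarrow> (nat \<Rightarrow> nat \<Rightarrow> 'a \<Rightarrow> real) \<Rightarrow> (nat \<Rightarrow> 'a \<Rightarrow> 'b) \<Rightarrow> nat \<Rightarrow> 'b set \<Rightarrow> 'a \<Rightarrow> real" where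
  "G_meas r V \<phi> i A \<omega> = (\<Sum>k. stick_W r V i k \<omega> * indicator A (\<phi> k \<omega>))"

end

theory Submission
  imports Defs
begin

definition clamp :: "real \<Rightarrow> real" where "clamp x = max 0 (min 1 x)"

lemma clamp_measurable[measurable]: "clamp \<in> borel_measurable borel"
  unfolding clamp_def by measurable

lemma clamp_bounds[simp]: "0 \<le> clamp x" "clamp x \<le> 1"
  by (auto simp: clamp_def)

type_synonym idx = "(nat \<times> nat) + nat"

definition Sx :: "nat \<Rightarrow> nat \<Rightarrow> nat \<Rightarrow> (idx \<Rightarrow> real) \<Rightarrow> real" where
  "Sx r i b x = (\<Prod>m\<in>{0..r-i}. x (Inl (m,b)))"
definition Px :: "nat \<Rightarrow> nat \<Rightarrow> nat \<Rightarrow> (idx \<Rightarrow> real) \<Rightarrow> real" where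
  "Px r i n x = (\<Prod>c<n. 1 - Sx r i c x)"
definition Wx :: "nat \<Rightarrow> nat \<Rightarrow> nat \<Rightarrow> (idx \<Rightarrow> real) \<Rightarrow> real" where
  "Wx r i b x = Sx r i b x * Px r i b x"
definition u01 :: "(idx \<Rightarrow> real) \<Rightarrow> bool" where
  "u01 x \<longleftrightarrow> (\<forall>t. 0 \<le> x t \<and> x t \<le> 1)"

lemma Sx_bounds: "u01 x \<Longrightarrow> 0 \<le> Sx r i b x \<and> Sx r i b x \<le> 1"
  unfolding Sx_def u01_def by (auto intro!: prod_nonneg prod_le_1)

lemma Px_bounds: "u01 x \<Longrightarrow> 0 \<le> Px r i n x \<and> Px r i n x \<le> 1"
  unfolding Px_def using Sx_bounds by (auto intro!: prod_nonneg prod_le_1)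

lemma Wx_bounds: "u01 x \<Longrightarrow> 0 \<le> Wx r i b x \<and> Wx r i b x \<le> 1"
  unfolding Wx_def using Sx_bounds[of x r i b] Px_bounds[of x r i b] by (auto intro: mult_le_one)

lemma Px_Suc: "Px r i (Suc n) x = Px r i n x * (1 - Sx r i n x)"
  by (simp add: Px_def)

lemma Wx_partial: "(\<Sum>k<n. Wx r i k x) = 1 - Px r i n x"
  by (induction n) (auto simp: Px_Suc Wx_def algebra_simps Px_def)

lemma Sx_restrict: "(\<And>m. m \<le> r - i \<Longrightarrow> Inl (m,b) \<in> J) \<Longrightarrow> Sx r i b (restrict x J) = Sx r i b x"
  unfolding Sx_def by (intro prod.cong) auto

lemma Px_restrict: "(\<And>m c. m \<le> r - i \<Longrightarrow> c < n \<Longrightarrow> Inl (m,c) \<in> J) \<Longrightarrow> Px r i n (restrict x J) = Px r i n x"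
  unfolding Px_def by (intro prod.cong) (auto simp: Sx_restrict)

lemma Wx_restrict: "(\<And>m c. m \<le> r - i \<Longrightarrow> c \<le> b \<Longrightarrow> Inl (m,c) \<in> J) \<Longrightarrow> Wx r i b (restrict x J) = Wx r i b x"
proof -
  assume h: "\<And>m c. m \<le> r - i \<Longrightarrow> c \<le> b \<Longrightarrow> Inl (m,c) \<in> J"
  have "Sx r i b (restrict x J) = Sx r i b x" by (rule Sx_restrict) (use h in auto)
  moreover have "Px r i b (restrict x J) = Px r i b x" by (rule Px_restrict) (use h in auto)
  ultimately show ?thesis by (simp add: Wx_def)
qed

lemma comp_meas: "t \<in> J \<Longrightarrow> (\<lambda>x. x t) \<in> borel_measurable (PiM J (\<lambda>_. borel))"
  by (rule measurable_component_singleton)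

lemma Sx_meas: "(\<And>m. m \<le> r - i \<Longrightarrow> Inl (m,b) \<in> J) \<Longrightarrow> Sx r i b \<in> borel_measurable (PiM J (\<lambda>_. borel))"
  unfolding Sx_def by (intro borel_measurable_prod comp_meas) auto

lemma Px_meas: "(\<And>m c. m \<le> r - i \<Longrightarrow> c < n \<Longrightarrow> Inl (m,c) \<in> J) \<Longrightarrow> Px r i n \<in> borel_measurable (PiM J (\<lambda>_. borel))"
  unfolding Px_def by (intro borel_measurable_prod borel_measurable_diff Sx_meas) auto

lemma Wx_meas: "(\<And>m c. m \<le> r - i \<Longrightarrow> c \<le> b \<Longrightarrow> Inl (m,c) \<in> J) \<Longrightarrow> Wx r i b \<in> borel_measurable (PiM J (\<lambda>_. borel))"
  unfolding Wx_def by (intro borel_measurable_times Sx_meas Px_meas) auto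

lemma (in prob_space) indep_blocks:
  fixes Y :: "'i \<Rightarrow> 'a \<Rightarrow> real" and J :: "'k \<Rightarrow> 'i set" and f :: "'k \<Rightarrow> ('i \<Rightarrow> real) \<Rightarrow> real"
  assumes ind: "indep_vars (\<lambda>_. borel) Y I"
    and fin: "finite K" and disj: "disjoint_family_on J K" and sub: "\<And>k. k \<in> K \<Longrightarrow> J k \<subseteq> I"
    and meas: "\<And>k. k \<in> K \<Longrightarrow> f k \<in> borel_measurable (PiM (J k) (\<lambda>_. borel))"
    and res: "\<And>k y. k \<in> K \<Longrightarrow> f k (restrict y (J k)) = f k y"
    and bnd: "\<And>k \<omega>. k \<in> K \<Longrightarrow> \<omega> \<in> space M \<Longrightarrow> \<bar>f k (\<lambda>t. Y t \<omega>)\<bar> \<le> 1"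
  shows "(\<integral>\<omega>. (\<Prod>k\<in>K. f k (\<lambda>t. Y t \<omega>)) \<partial>M) = (\<Prod>k\<in>K. \<integral>\<omega>. f k (\<lambda>t. Y t \<omega>) \<partial>M)"
proof -
  have i1: "indep_vars (\<lambda>k. PiM (J k) (\<lambda>_. borel)) (\<lambda>k \<omega>. restrict (\<lambda>t. Y t \<omega>) (J k)) K"
    by (rule indep_vars_restrict[OF ind sub disj])
  have i2: "indep_vars (\<lambda>_. borel) (\<lambda>k \<omega>. f k (restrict (\<lambda>t. Y t \<omega>) (J k))) K"
    by (rule indep_vars_compose2[OF i1 meas])
  have rv: "(\<lambda>\<omega>. restrict (\<lambda>t. Y t \<omega>) (J k)) \<in> measurable M (PiM (J k) (\<lambda>_. borel))" if "k \<in> K" for k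
    using i1 that unfolding indep_vars_def by auto
  have i3: "indep_vars (\<lambda>_. borel) (\<lambda>k \<omega>. f k (\<lambda>t. Y t \<omega>)) K"
    by (rule indep_vars_cong[THEN iffD1, OF refl _ _ i2]) (auto simp: res fun_eq_iff)
  have int: "integrable M (\<lambda>\<omega>. f k (\<lambda>t. Y t \<omega>))" if "k \<in> K" for k
  proof (rule integrable_const_bound[where B=1])
    show "AE x in M. norm (f k (\<lambda>t. Y t x)) \<le> 1" using bnd that by auto
    have "(\<lambda>\<omega>. f k (restrict (\<lambda>t. Y t \<omega>) (J k))) \<in> borel_measurable M"
      using measurable_comp[OF rv[OF that] meas[OF that]] by (simp add: comp_def)
    then show "(\<lambda>\<omega>. f k (\<lambda>t. Y t \<omega>)) \<in> borel_measurable M" by (simp add: res that)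
  qed
  show ?thesis
    by (rule indep_vars_lebesgue_integral[OF fin i3 int])
qed

lemma (in prob_space) indep_two:
  fixes Y :: "'i \<Rightarrow> 'a \<Rightarrow> real" and f1 f2 :: "('i \<Rightarrow> real) \<Rightarrow> real"
  assumes ind: "indep_vars (\<lambda>_. borel) Y I"
    and disj: "JA \<inter> JB = {}" and sub: "JA \<subseteq> I" "JB \<subseteq> I"
    and meas: "f1 \<in> borel_measurable (PiM JA (\<lambda>_. borel))" "f2 \<in> borel_measurable (PiM JB (\<lambda>_. borel))"
    and res: "\<And>y. f1 (restrict y JA) = f1 y" "\<And>y. f2 (restrict y JB) = f2 y"
    and bnd: "\<And>\<omega>. \<omega> \<in> space M \<Longrightarrow> \<bar>f1 (\<lambda>t. Y t \<omega>)\<bar> \<le> 1" "\<And>\<omega>. \<omega> \<in> space M \<Longrightarrow> \<bar>f2 (\<lambda>t. Y t \<omega>)\<bar> \<le> 1"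
  shows "(\<integral>\<omega>. f1 (\<lambda>t. Y t \<omega>) * f2 (\<lambda>t. Y t \<omega>) \<partial>M) = (\<integral>\<omega>. f1 (\<lambda>t. Y t \<omega>) \<partial>M) * (\<integral>\<omega>. f2 (\<lambda>t. Y t \<omega>) \<partial>M)"
proof -
  have "(\<integral>\<omega>. (\<Prod>k\<in>UNIV. (if k then f1 else f2) (\<lambda>t. Y t \<omega>)) \<partial>M) = (\<Prod>k\<in>UNIV. \<integral>\<omega>. (if k then f1 else f2) (\<lambda>t. Y t \<omega>) \<partial>M)"
    by (rule indep_blocks[OF ind, where J="\<lambda>k. if k then JA else JB"])
       (use assms in \<open>auto simp: disjoint_family_on_def res[unfolded restrict_def]\<close>)
  then show ?thesis by (simp add: UNIV_bool mult.commute)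
qed



lemma Beta_real_pos: "a > 0 \<Longrightarrow> b > 0 \<Longrightarrow> Beta a b > (0::real)"
  by (simp add: Beta_def)

lemma beta_int:
  fixes a b :: real and n :: nat
  assumes a: "a > 0" and b: "b > 0"
  shows "(\<integral>x. beta_density a b x * clamp x ^ n \<partial>lborel) = Beta (a + n) b / Beta a b"
proof -
  have B: "Beta a b > 0" using Beta_real_pos a b by simp
  have eq: "beta_density a b x * clamp x ^ n =
     indicator {0<..<1} x * (x powr (a + n - 1) * (1 - x) powr (b - 1) / Beta a b)" for x
  proof (cases "0 < x \<and> x < 1")
    case True
    then have "x powr (a - 1) * x ^ n = x powr (a + n - 1)"
      by (simp add: powr_realpow[symmetric] powr_add[symmetric] algebra_simps)
    then show ?thesis using True
      by (simp add: beta_density_def clamp_def indicator_def field_simps)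
  qed (auto simp: beta_density_def indicator_def)
  have hi: "((\<lambda>x. x powr (a + n - 1) * (1 - x) powr (b - 1)) has_integral Beta (a+n) b) {0<..<1}"
    using has_integral_Beta_real[of "a+n" b] a b by (simp add: has_integral_Icc_iff_Ioo)
  have hi2: "((\<lambda>x. x powr (a + n - 1) * (1 - x) powr (b - 1) / Beta a b) has_integral Beta (a+n) b / Beta a b) {0<..<1}"
    using has_integral_divide[OF hi] by simp
  have "(\<integral>x. beta_density a b x * clamp x ^ n \<partial>lborel) =
        (\<integral>x. indicator {0<..<1} x * (x powr (a + n - 1) * (1 - x) powr (b - 1) / Beta a b) \<partial>lborel)"
    by (simp only: eq)
  also have "\<dots> = enn2real (\<integral>\<^sup>+x. ennreal (indicator {0<..<1} x * (x powr (a + n - 1) * (1 - x) powr (b - 1) / Beta a b)) \<partial>lborel)"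
    by (rule integral_eq_nn_integral) (auto simp: B indicator_def intro!: AE_I2 divide_nonneg_pos)
  also have "(\<integral>\<^sup>+x. ennreal (indicator {0<..<1} x * (x powr (a + n - 1) * (1 - x) powr (b - 1) / Beta a b)) \<partial>lborel) = ennreal (Beta (a+n) b / Beta a b)"
    using nn_integral_has_integral_lebesgue[OF _ hi2] B by simp
  finally show ?thesis using B a b Beta_real_pos[of "a+n" b] by simp
qed


lemma Beta_ratio1: "(a::real) > 0 \<Longrightarrow> b > 0 \<Longrightarrow> Beta (a + 1) b / Beta a b = a / (a + b)"
proof -
  assume a: "a > 0" and b: "b > 0"
  have "a \<notin> \<int>\<^sub>\<le>\<^sub>0" using a nonpos_Ints_nonpos by force
  from Beta_plus1_left[OF this, of b] have "Beta (a+1) b = a * Beta a b / (a + b)"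
    using a b by (simp add: field_simps)
  then show ?thesis using Beta_real_pos[OF a b] a b by simp
qed

lemma Beta_ratio2: "(a::real) > 0 \<Longrightarrow> b > 0 \<Longrightarrow> Beta (a + 2) b / Beta a b = a * (a + 1) / ((a + b) * (a + b + 1))"
proof -
  assume a: "a > 0" and b: "b > 0"
  have "Beta (a + 2) b = Beta ((a+1) + 1) b" by (simp add: add.assoc)
  also have "\<dots> = (a+1) / (a + 1 + b) * Beta (a+1) b"
    using Beta_ratio1[of "a+1" b] a b Beta_real_pos[of "a+1" b] by (simp add: field_simps)
  also have "Beta (a+1) b = a / (a + b) * Beta a b"
    using Beta_ratio1[of a b] a b Beta_real_pos[of a b] by (simp add: field_simps)
  finally have "Beta (a + 2) b = (a+1) / (a + 1 + b) * (a / (a + b) * Beta a b)" .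
  then have "Beta (a + 2) b / Beta a b = (a+1) / (a + 1 + b) * (a / (a + b))"
    using Beta_real_pos[of a b] a b by simp
  moreover have "a + b > 0" "a + 1 + b > 0" "a + b + 1 > 0" using a b by auto
  ultimately show ?thesis by (simp add: field_simps)
qed

lemma (in prob_space) beta_moment:
  assumes a: "a > 0" and b: "b > 0"
    and D: "distributed M lborel X (\<lambda>x. ennreal (beta_density a b x))"
  shows "(\<integral>\<omega>. clamp (X \<omega>) ^ n \<partial>M) = Beta (a + n) b / Beta a b"
proof -
  have "(\<integral>\<omega>. clamp (X \<omega>) ^ n \<partial>M) = (\<integral>x. beta_density a b x * clamp x ^ n \<partial>lborel)"
    by (rule distributed_integral[OF D, symmetric])
       (auto simp: beta_density_def clamp_def Beta_real_pos[OF a b] intro!: divide_nonneg_pos)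
  then show ?thesis using beta_int[OF a b] by simp
qed

lemma (in prob_space) beta_AE:
  assumes a: "a > 0" and b: "b > 0"
    and D: "distributed M lborel X (\<lambda>x. ennreal (beta_density a b x))"
  shows "AE \<omega> in M. 0 < X \<omega> \<and> X \<omega> < 1"
proof -
  have "emeasure M (X -` (- {0<..<1}) \<inter> space M) = (\<integral>\<^sup>+x. ennreal (beta_density a b x) * indicator (- {0<..<1}) x \<partial>lborel)"
    by (rule distributed_emeasure[OF D]) auto
  also have "(\<lambda>x. ennreal (beta_density a b x) * indicator (- {0<..<1}) x) = (\<lambda>x. 0)"
    by (auto simp: beta_density_def indicator_def fun_eq_iff)
  finally have "emeasure M (X -` (- {0<..<1}) \<inter> space M) = 0" by simp
  then show ?thesis
    by (intro AE_I[where N="X -` (- {0<..<1}) \<inter> space M"]) 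
       (auto intro!: measurable_sets[OF distributed_measurable[OF D]])
qed

lemma telescope: "(\<And>m. m \<le> Suc n \<Longrightarrow> g m \<noteq> (0::real)) \<Longrightarrow> (\<Prod>m\<in>{0..n}. g m / g (Suc m)) = g 0 / g (Suc n)"
  by (induction n) (auto simp: prod.atLeast0_atMost_Suc)

locale model = prob_space M for M :: "'a measure" +
  fixes H0 :: "'b measure" and r :: nat and \<alpha> :: "nat \<Rightarrow> real"
    and V :: "nat \<Rightarrow> nat \<Rightarrow> 'a \<Rightarrow> real" and \<phi> :: "nat \<Rightarrow> 'a \<Rightarrow> 'b" and A :: "'b set"
  assumes r2: "r \<ge> 2"
    and \<alpha>_pos: "\<And>l. l \<in> {1..r} \<Longrightarrow> \<alpha> l > 0"
    and H0: "prob_space H0"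
    and V_meas: "\<And>m k. m < r \<Longrightarrow> V m k \<in> borel_measurable M"
    and V_beta: "\<And>m k. m < r \<Longrightarrow>
        distributed M lborel (V m k)
          (\<lambda>x. ennreal (beta_density (1 + (\<Sum>l=1..m. \<alpha> l)) (\<alpha> (m + 1)) x))"
    and \<phi>_meas: "\<And>k. \<phi> k \<in> measurable M H0"
    and \<phi>_law: "\<And>k. distr M H0 (\<phi> k) = H0"
    and indep: "indep_sets
        (case_sum
           (\<lambda>(m, k). sigma_sets (space M) {V m k -` B \<inter> space M | B. B \<in> sets borel})
           (\<lambda>k. sigma_sets (space M) {\<phi> k -` B \<inter> space M | B. B \<in> sets H0}))
        (({..<r} \<times> UNIV) <+> UNIV)"
    and A: "A \<in> sets H0"
begin

definition "Vc m k \<omega> = clamp (V m k \<omega>)"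
definition "p = measure H0 A"
definition Y :: "idx \<Rightarrow> 'a \<Rightarrow> real" where
  "Y t \<omega> = (case t of Inl mk \<Rightarrow> Vc (fst mk) (snd mk) \<omega> | Inr k \<Rightarrow> indicator A (\<phi> k \<omega>))"
definition II :: "idx set" where "II = ({..<r} \<times> UNIV) <+> UNIV"
definition "Asum n = (\<Sum>l=1..n. \<alpha> l)"

lemma Y_u01: "u01 (\<lambda>t. Y t \<omega>)"
  by (auto simp: u01_def Y_def Vc_def split: sum.split)

lemma Y_abs: "\<bar>Y t \<omega>\<bar> \<le> 1"
  using Y_u01[of \<omega>] by (auto simp: u01_def)

lemma Y_meas: "t \<in> II \<Longrightarrow> Y t \<in> borel_measurable M"
proof -
  assume t: "t \<in> II"
  show ?thesis
  proof (cases t)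
    case (Inl mk)
    then obtain m k where mk: "t = Inl (m,k)" "m < r" using t by (cases mk) (auto simp: II_def)
    have "Y t = (\<lambda>\<omega>. clamp (V m k \<omega>))" by (simp add: fun_eq_iff Y_def Vc_def mk)
    then show ?thesis using V_meas[OF mk(2)] by (simp add: measurable_compose[OF _ clamp_measurable])
  next
    case (Inr k)
    have "Y t = (\<lambda>\<omega>. indicator A (\<phi> k \<omega>))" by (simp add: fun_eq_iff Y_def Inr)
    then show ?thesis using measurable_compose[OF \<phi>_meas borel_measurable_indicator[OF A]] by simp
  qed
qed

lemma indY: "indep_vars (\<lambda>_. borel) Y II"
  unfolding indep_vars_def
proof (intro conjI ballI)
  show "random_variable borel (Y t)" if "t \<in> II" for t using Y_meas[OF that] by simp
  show "indep_sets (\<lambda>t. sigma_sets (space M) {Y t -` B \<inter> space M |B. B \<in> sets borel}) II"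
    unfolding II_def
  proof (rule indep_sets_mono_sets[OF indep])
    fix t assume t: "t \<in> ({..<r} \<times> (UNIV::nat set)) <+> (UNIV::nat set)"
    show "sigma_sets (space M) {Y t -` B \<inter> space M |B. B \<in> sets borel} \<subseteq>
      case_sum (\<lambda>(m, k). sigma_sets (space M) {V m k -` B \<inter> space M | B. B \<in> sets borel})
           (\<lambda>k. sigma_sets (space M) {\<phi> k -` B \<inter> space M | B. B \<in> sets H0}) t"
    proof (cases t)
      case (Inl mk)
      obtain m k where mk: "mk = (m,k)" by force
      show ?thesis unfolding Inl mk
      proof (simp, rule sigma_sets_subseteq, safe)
        fix B :: "real set" assume B: "B \<in> sets borel"
        have "clamp -` B \<in> sets borel"
          using measurable_sets[OF clamp_measurable B] by simp
        moreover have "Y (Inl (m, k)) -` B \<inter> space M = V m k -` (clamp -` B) \<inter> space M"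
          by (auto simp: Y_def Vc_def)
        ultimately show "\<exists>B'. Y (Inl (m, k)) -` B \<inter> space M = V m k -` B' \<inter> space M \<and> B' \<in> sets borel"
          by blast
      qed
    next
      case (Inr k)
      show ?thesis unfolding Inr
      proof (simp, rule sigma_sets_subseteq, safe)
        fix B :: "real set" assume B: "B \<in> sets borel"
        have "indicator A -` B \<inter> space H0 \<in> sets H0"
          using measurable_sets[OF borel_measurable_indicator[OF A] B] by simp
        moreover have "Y (Inr k) -` B \<inter> space M = \<phi> k -` (indicator A -` B \<inter> space H0) \<inter> space M"
          using measurable_space[OF \<phi>_meas[of k]] by (auto simp: Y_def)
        ultimately show "\<exists>B'. Y (Inr k) -` B \<inter> space M = \<phi> k -` B' \<inter> space M \<and> B' \<in> sets H0"
          by blast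
      qed
    qed
  qed
qed

lemma meas_F:
  assumes "J \<subseteq> II" "F \<in> borel_measurable (PiM J (\<lambda>_. borel))" "\<And>y. F (restrict y J) = F y"
  shows "(\<lambda>\<omega>. F (\<lambda>t. Y t \<omega>)) \<in> borel_measurable M"
proof -
  have "(\<lambda>\<omega>. restrict (\<lambda>t. Y t \<omega>) J) \<in> measurable M (PiM J (\<lambda>_. borel))"
    using assms(1) by (intro measurable_restrict Y_meas) auto
  from measurable_comp[OF this assms(2)] show ?thesis by (simp add: comp_def assms(3))
qed

lemma int_F:
  assumes "J \<subseteq> II" "F \<in> borel_measurable (PiM J (\<lambda>_. borel))" "\<And>y. F (restrict y J) = F y"
    and "\<And>\<omega>. \<bar>F (\<lambda>t. Y t \<omega>)\<bar> \<le> (B::real)"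
  shows "integrable M (\<lambda>\<omega>. F (\<lambda>t. Y t \<omega>))"
  by (rule integrable_const_bound[where B=B]) (use meas_F[OF assms(1-3)] assms(4) in auto)

lemma Asum_Suc: "Asum (Suc m) = Asum m + \<alpha> (Suc m)"
  by (simp add: Asum_def)

lemma Asum_nonneg: "m \<le> r \<Longrightarrow> Asum m \<ge> 0"
  unfolding Asum_def using \<alpha>_pos by (intro sum_nonneg) (auto simp: less_imp_le)

lemma Asum_pos: "1 \<le> m \<Longrightarrow> m \<le> r \<Longrightarrow> Asum m > 0"
proof -
  assume "1 \<le> m" "m \<le> r"
  then obtain n where n: "m = Suc n" by (cases m) auto
  with \<open>m \<le> r\<close> have "Asum n \<ge> 0" "\<alpha> (Suc n) > 0" using Asum_nonneg \<alpha>_pos by auto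
  then show ?thesis by (simp add: n Asum_Suc)
qed

lemma EV: "m < r \<Longrightarrow> (\<integral>\<omega>. Y (Inl (m,k)) \<omega> \<partial>M) = (1 + Asum m) / (1 + Asum (Suc m))"
proof -
  assume m: "m < r"
  have a: "1 + Asum m > 0" using Asum_nonneg[of m] m by simp
  have b: "\<alpha> (m+1) > 0" using \<alpha>_pos m by auto
  have "(\<integral>\<omega>. Y (Inl (m,k)) \<omega> \<partial>M) = (\<integral>\<omega>. clamp (V m k \<omega>) ^ 1 \<partial>M)"
    by (simp add: Y_def Vc_def)
  also have "\<dots> = Beta (1 + Asum m + 1) (\<alpha> (m+1)) / Beta (1 + Asum m) (\<alpha> (m+1))"
    using beta_moment[OF a b V_beta[OF m, of k, folded Asum_def], of 1] by simp
  also have "\<dots> = (1 + Asum m) / (1 + Asum m + \<alpha> (m+1))"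
    by (rule Beta_ratio1[OF a b])
  finally show ?thesis by (simp add: Asum_Suc add.assoc)
qed

lemma EV2: "m < r \<Longrightarrow> (\<integral>\<omega>. (Y (Inl (m,k)) \<omega>)^2 \<partial>M) =
   (1 + Asum m) / (1 + Asum (Suc m)) * ((2 + Asum m) / (2 + Asum (Suc m)))"
proof -
  assume m: "m < r"
  have a: "1 + Asum m > 0" using Asum_nonneg[of m] m by simp
  have b: "\<alpha> (m+1) > 0" using \<alpha>_pos m by auto
  have "(\<integral>\<omega>. (Y (Inl (m,k)) \<omega>)^2 \<partial>M) = (\<integral>\<omega>. clamp (V m k \<omega>) ^ 2 \<partial>M)"
    by (simp add: Y_def Vc_def)
  also have "\<dots> = Beta (1 + Asum m + 2) (\<alpha> (m+1)) / Beta (1 + Asum m) (\<alpha> (m+1))"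
    using beta_moment[OF a b V_beta[OF m, of k, folded Asum_def], of 2] by simp
  also have "\<dots> = (1 + Asum m) * (1 + Asum m + 1) / ((1 + Asum m + \<alpha> (m+1)) * (1 + Asum m + \<alpha> (m+1) + 1))"
    by (rule Beta_ratio2[OF a b])
  finally show ?thesis by (simp add: Asum_Suc add.assoc field_simps)
qed

definition Jb :: "nat \<Rightarrow> idx set" where "Jb b = Inl ` ({..<r} \<times> {b})"
definition dd :: "nat \<Rightarrow> real" where "dd i = Asum (Suc (r - i))"

lemma Jb_sub: "Jb b \<subseteq> II" by (auto simp: Jb_def II_def)
lemma Jb_disj: "disjoint_family_on Jb K" by (auto simp: disjoint_family_on_def Jb_def)
lemma in_Jb: "1 \<le> i \<Longrightarrow> m \<le> r - i \<Longrightarrow> Inl (m,b) \<in> Jb b"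
  using r2 by (auto simp: Jb_def)

lemma dd_pos: "1 \<le> i \<Longrightarrow> i \<le> r \<Longrightarrow> dd i > 0"
  unfolding dd_def by (rule Asum_pos) auto

lemma dd_mono: "1 \<le> i \<Longrightarrow> i \<le> j \<Longrightarrow> j \<le> r \<Longrightarrow> dd j \<le> dd i"
  unfolding dd_def Asum_def using \<alpha>_pos
  by (intro sum_mono2) (auto simp: less_imp_le)

lemma Sx_b_meas: "1 \<le> i \<Longrightarrow> Sx r i b \<in> borel_measurable (PiM (Jb b) (\<lambda>_. borel))"
  by (rule Sx_meas) (rule in_Jb)
lemma Sx_b_res: "1 \<le> i \<Longrightarrow> Sx r i b (restrict y (Jb b)) = Sx r i b y"
  by (rule Sx_restrict) (rule in_Jb)
lemma Sx_Y: "0 \<le> Sx r i b (\<lambda>t. Y t \<omega>) \<and> Sx r i b (\<lambda>t. Y t \<omega>) \<le> 1"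
  using Sx_bounds[OF Y_u01] by blast

lemma intS: "1 \<le> i \<Longrightarrow> integrable M (\<lambda>\<omega>. Sx r i b (\<lambda>t. Y t \<omega>))"
  by (rule int_F[OF Jb_sub Sx_b_meas Sx_b_res, where B=1]) (use Sx_Y in auto)

lemma intSS: "1 \<le> i \<Longrightarrow> 1 \<le> j \<Longrightarrow> integrable M (\<lambda>\<omega>. Sx r i b (\<lambda>t. Y t \<omega>) * Sx r j b (\<lambda>t. Y t \<omega>))"
  by (rule int_F[OF Jb_sub _ _, where B=1 and F="\<lambda>x. Sx r i b x * Sx r j b x"])
     (use Sx_Y in \<open>auto simp: Sx_b_res intro!: borel_measurable_times Sx_b_meas mult_le_one\<close>)

lemma ne: "m \<le> r \<Longrightarrow> 1 + Asum m \<noteq> 0"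
  using Asum_nonneg[of m] by simp
lemma ne2: "m \<le> r \<Longrightarrow> 2 + Asum m \<noteq> 0"
  using Asum_nonneg[of m] by simp

lemma ES: "1 \<le> i \<Longrightarrow> i \<le> r \<Longrightarrow> (\<integral>\<omega>. Sx r i b (\<lambda>t. Y t \<omega>) \<partial>M) = 1 / (1 + dd i)"
proof -
  assume i: "1 \<le> i" "i \<le> r"
  have "(\<integral>\<omega>. (\<Prod>m\<in>{0..r-i}. Y (Inl (m,b)) \<omega>) \<partial>M) = (\<Prod>m\<in>{0..r-i}. \<integral>\<omega>. Y (Inl (m,b)) \<omega> \<partial>M)"
    by (rule indep_blocks[OF indY, where J="\<lambda>m. {Inl (m,b)}" and f = "\<lambda>m x. x (Inl (m,b))"])
       (use i r2 in \<open>auto simp: disjoint_family_on_def II_def intro: comp_meas Y_abs\<close>)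
  also have "\<dots> = (\<Prod>m\<in>{0..r-i}. (1 + Asum m) / (1 + Asum (Suc m)))"
    using i r2 by (intro prod.cong refl EV) auto
  also have "\<dots> = (1 + Asum 0) / (1 + Asum (Suc (r - i)))"
    by (intro telescope ne) (use i in arith)
  finally show ?thesis by (simp add: Sx_def dd_def Asum_def)
qed

lemma ESS: "1 \<le> i \<Longrightarrow> i \<le> j \<Longrightarrow> j \<le> r \<Longrightarrow>
   (\<integral>\<omega>. Sx r i b (\<lambda>t. Y t \<omega>) * Sx r j b (\<lambda>t. Y t \<omega>) \<partial>M) = 2 / ((1 + dd i) * (2 + dd j))"
proof -
  assume i: "1 \<le> i" "i \<le> j" "j \<le> r"
  have sub: "{m \<in> {0..r-i}. m \<le> r - j} = {0..r-j}" using i by auto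
  have eq: "Sx r i b y * Sx r j b y = (\<Prod>m\<in>{0..r-i}. (if m \<le> r - j then y (Inl (m,b)) ^ 2 else y (Inl (m,b))))" for y
  proof -
    have "Sx r j b y = (\<Prod>m\<in>{0..r-i}. (if m \<le> r - j then y (Inl (m,b)) else 1))"
    proof -
      have "(\<Prod>m\<in>{0..r-i}. (if m \<le> r - j then y (Inl (m,b)) else 1)) = (\<Prod>m\<in>{m \<in> {0..r-i}. m \<le> r - j}. y (Inl (m,b)))"
        by (rule prod.inter_filter[symmetric]) simp
      then show ?thesis by (simp only: sub Sx_def)
    qed
    then show ?thesis unfolding Sx_def 
      by (simp add: prod.distrib[symmetric] power2_eq_square) (intro prod.cong refl, simp add: power2_eq_square)
  qed
  have pf: "(\<Prod>m\<in>{0..r-i}. if m \<le> r - j then (2 + Asum m) / (2 + Asum (Suc m)) else 1) = (\<Prod>m\<in>{0..r-j}. (2 + Asum m) / (2 + Asum (Suc m)))"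
  proof -
    have "(\<Prod>m\<in>{0..r-i}. if m \<le> r - j then (2 + Asum m) / (2 + Asum (Suc m)) else 1) = (\<Prod>m\<in>{m \<in> {0..r-i}. m \<le> r - j}. (2 + Asum m) / (2 + Asum (Suc m)))"
      by (rule prod.inter_filter[symmetric]) simp
    then show ?thesis by (simp only: sub)
  qed
  have "(\<integral>\<omega>. (\<Prod>m\<in>{0..r-i}. (if m \<le> r - j then Y (Inl (m,b)) \<omega> ^ 2 else Y (Inl (m,b)) \<omega>)) \<partial>M)
     = (\<Prod>m\<in>{0..r-i}. \<integral>\<omega>. (if m \<le> r - j then Y (Inl (m,b)) \<omega> ^ 2 else Y (Inl (m,b)) \<omega>) \<partial>M)"
    by (rule indep_blocks[OF indY, where J="\<lambda>m. {Inl (m,b)}" and f = "\<lambda>m x. (if m \<le> r - j then x (Inl (m,b)) ^ 2 else x (Inl (m,b)))"])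
       (use i r2 Y_abs in \<open>auto simp: disjoint_family_on_def II_def abs_square_le_1 intro: comp_meas borel_measurable_power\<close>)
  also have "\<dots> = (\<Prod>m\<in>{0..r-i}. (1 + Asum m) / (1 + Asum (Suc m)) * (if m \<le> r - j then (2 + Asum m) / (2 + Asum (Suc m)) else 1))"
    using i r2 by (intro prod.cong refl) (auto simp: EV EV2)
  also have "\<dots> = (\<Prod>m\<in>{0..r-i}. (1 + Asum m) / (1 + Asum (Suc m))) * (\<Prod>m\<in>{0..r-j}. (2 + Asum m) / (2 + Asum (Suc m)))"
    by (simp only: prod.distrib pf)
  also have "\<dots> = ((1 + Asum 0) / (1 + Asum (Suc (r - i)))) * ((2 + Asum 0) / (2 + Asum (Suc (r - j))))"
    using i by (intro arg_cong2[where f="(*)"] telescope ne ne2) arith+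
  finally show ?thesis by (simp add: eq dd_def Asum_def)
qed

end

context model begin

definition ee :: "nat \<Rightarrow> nat \<Rightarrow> real" where "ee i j = 2 / ((1 + dd i) * (2 + dd j))"
definition ff :: "nat \<Rightarrow> nat \<Rightarrow> real" where "ff i j = 1 - 1 / (1 + dd i) - 1 / (1 + dd j) + ee i j"
definition Jle :: "nat \<Rightarrow> idx set" where "Jle k = Inl ` ({..<r} \<times> {..k})"

lemma p_bounds: "0 \<le> p" "p \<le> 1"
  using prob_space.prob_le_1[OF H0] by (auto simp: p_def)

lemma Jle_sub: "Jle k \<subseteq> II" by (auto simp: Jle_def II_def)
lemma in_Jle: "1 \<le> i \<Longrightarrow> m \<le> r - i \<Longrightarrow> c \<le> k \<Longrightarrow> Inl (m,c) \<in> Jle k"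
  using r2 by (auto simp: Jle_def)
lemma in_II: "1 \<le> i \<Longrightarrow> m \<le> r - i \<Longrightarrow> Inl (m,c) \<in> II"
  using r2 by (auto simp: II_def)
lemma Inr_II: "Inr k \<in> II" by (auto simp: II_def)

lemma u01_abs: "u01 x \<Longrightarrow> \<bar>x t\<bar> \<le> 1" by (auto simp: u01_def)

lemma ES1S: "1 \<le> i \<Longrightarrow> i \<le> j \<Longrightarrow> j \<le> r \<Longrightarrow>
   (\<integral>\<omega>. (1 - Sx r i b (\<lambda>t. Y t \<omega>)) * (1 - Sx r j b (\<lambda>t. Y t \<omega>)) \<partial>M) = ff i j"
proof -
  assume i: "1 \<le> i" "i \<le> j" "j \<le> r"
  have "(\<lambda>\<omega>. (1 - Sx r i b (\<lambda>t. Y t \<omega>)) * (1 - Sx r j b (\<lambda>t. Y t \<omega>))) =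
        (\<lambda>\<omega>. 1 - Sx r i b (\<lambda>t. Y t \<omega>) - Sx r j b (\<lambda>t. Y t \<omega>) + Sx r i b (\<lambda>t. Y t \<omega>) * Sx r j b (\<lambda>t. Y t \<omega>))"
    by (auto simp: fun_eq_iff algebra_simps)
  then show ?thesis using i
    by (simp add: integral_add integral_diff intS intSS ES ESS ff_def ee_def prob_space)
qed

lemma EP: "1 \<le> i \<Longrightarrow> i \<le> r \<Longrightarrow> (\<integral>\<omega>. Px r i n (\<lambda>t. Y t \<omega>) \<partial>M) = (1 - 1 / (1 + dd i)) ^ n"
proof -
  assume i: "1 \<le> i" "i \<le> r"
  have "(\<integral>\<omega>. (\<Prod>c\<in>{..<n}. 1 - Sx r i c (\<lambda>t. Y t \<omega>)) \<partial>M) = (\<Prod>c\<in>{..<n}. \<integral>\<omega>. 1 - Sx r i c (\<lambda>t. Y t \<omega>) \<partial>M)"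
    by (rule indep_blocks[OF indY, where J=Jb and f = "\<lambda>c x. 1 - Sx r i c x"])
       (use i Sx_Y in \<open>auto simp: Jb_disj Jb_sub Sx_b_res intro!: borel_measurable_diff Sx_b_meas\<close>)
  also have "\<dots> = (\<Prod>c\<in>{..<n}. 1 - 1 / (1 + dd i))"
    using i by (intro prod.cong refl) (simp add: integral_diff intS ES prob_space)
  finally show ?thesis by (simp add: Px_def)
qed

lemma EWW: "1 \<le> i \<Longrightarrow> i \<le> j \<Longrightarrow> j \<le> r \<Longrightarrow>
   (\<integral>\<omega>. Wx r i k (\<lambda>t. Y t \<omega>) * Wx r j k (\<lambda>t. Y t \<omega>) \<partial>M) = ff i j ^ k * ee i j"
proof -
  assume i: "1 \<le> i" "i \<le> j" "j \<le> r"
  define g where "g c x = (if c < k then (1 - Sx r i c x) * (1 - Sx r j c x) else Sx r i c x * Sx r j c x)" for c x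
  have eq: "Wx r i k y * Wx r j k y = (\<Prod>c\<in>{..k}. g c y)" for y
  proof -
    have "(\<Prod>c\<in>{..k}. g c y) = g k y * (\<Prod>c\<in>{..<k}. g c y)"
      by (simp add: lessThan_Suc_atMost[symmetric])
    also have "(\<Prod>c\<in>{..<k}. g c y) = Px r i k y * Px r j k y"
      by (simp add: g_def Px_def prod.distrib[symmetric])
    finally show ?thesis by (simp add: Wx_def g_def)
  qed
  have gb: "\<bar>g c (\<lambda>t. Y t \<omega>)\<bar> \<le> 1" for c \<omega>
    using Sx_Y[of i c \<omega>] Sx_Y[of j c \<omega>] by (auto simp: g_def intro!: mult_le_one)
  have gm: "g c \<in> borel_measurable (PiM (Jb c) (\<lambda>_. borel))" for c
  proof (cases "c < k")
    case True
    have "(\<lambda>x. (1 - Sx r i c x) * (1 - Sx r j c x)) \<in> borel_measurable (PiM (Jb c) (\<lambda>_. borel))"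
      by (intro borel_measurable_times borel_measurable_diff borel_measurable_const Sx_b_meas) (use i in auto)
    then show ?thesis using True by (simp add: g_def[abs_def])
  next
    case False
    have "(\<lambda>x. Sx r i c x * Sx r j c x) \<in> borel_measurable (PiM (Jb c) (\<lambda>_. borel))"
      by (intro borel_measurable_times Sx_b_meas) (use i in auto)
    then show ?thesis using False by (simp add: g_def[abs_def])
  qed
  have "(\<integral>\<omega>. (\<Prod>c\<in>{..k}. g c (\<lambda>t. Y t \<omega>)) \<partial>M) = (\<Prod>c\<in>{..k}. \<integral>\<omega>. g c (\<lambda>t. Y t \<omega>) \<partial>M)"
    by (rule indep_blocks[OF indY, where J=Jb and f = g])
       (use i gb gm in \<open>auto simp: Jb_disj Jb_sub g_def Sx_b_res\<close>)
  also have "\<dots> = (\<Prod>c\<in>{..k}. if c < k then ff i j else ee i j)"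
    using i by (intro prod.cong refl) (auto simp: g_def ES1S ESS ee_def)
  also have "\<dots> = ff i j ^ k * ee i j"
    by (simp add: lessThan_Suc_atMost[symmetric])
  finally show ?thesis by (simp add: eq)
qed

lemma YI_eq: "Y (Inr k) = (\<lambda>\<omega>. indicator A (\<phi> k \<omega>))"
  by (simp add: fun_eq_iff Y_def)

lemma E_I: "(\<integral>\<omega>. Y (Inr k) \<omega> \<partial>M) = p"
proof -
  have eq: "(\<integral>\<omega>. (indicator A (\<phi> k \<omega>) :: real) \<partial>M) = (\<integral>x. (indicator A x :: real) \<partial>distr M H0 (\<phi> k))"
    by (rule integral_distr[symmetric]) (use \<phi>_meas A in auto)
  have "A \<inter> space H0 = A" using sets.sets_into_space[OF A] by auto
  then show ?thesis by (simp add: YI_eq eq \<phi>_law p_def)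

qed

lemma int_I: "integrable M (Y (Inr k))"
  by (rule integrable_const_bound[where B=1]) (auto simp: Y_abs Y_meas Inr_II)

lemma E_Ip: "(\<integral>\<omega>. Y (Inr k) \<omega> - p \<partial>M) = 0"
  by (simp add: integral_diff int_I E_I prob_space)

lemma E_Ip2: "(\<integral>\<omega>. (Y (Inr k) \<omega> - p)^2 \<partial>M) = p * (1 - p)"
proof -
  have "(\<lambda>\<omega>. (Y (Inr k) \<omega> - p)^2) = (\<lambda>\<omega>. (1 - 2 * p) * Y (Inr k) \<omega> + p^2)"
    by (auto simp: fun_eq_iff YI_eq power2_eq_square algebra_simps indicator_def)
  then show ?thesis by (simp add: integral_add int_I E_I prob_space power2_eq_square algebra_simps)
qed

lemma Ip_abs: "\<bar>Y (Inr l) \<omega> - p\<bar> \<le> 1"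
proof -
  have "0 \<le> Y (Inr l) \<omega>" "Y (Inr l) \<omega> \<le> 1" using Y_u01[of \<omega>] by (auto simp: u01_def)
  then show ?thesis using p_bounds by (auto simp: abs_le_iff)
qed

lemma zeroI:
  assumes J: "J \<subseteq> II" "Inr l \<notin> J" and F: "F \<in> borel_measurable (PiM J (\<lambda>_. borel))"
    and res: "\<And>y. F (restrict y J) = F y" and bnd: "\<And>\<omega>. \<bar>F (\<lambda>t. Y t \<omega>)\<bar> \<le> 1"
  shows "(\<integral>\<omega>. F (\<lambda>t. Y t \<omega>) * (Y (Inr l) \<omega> - p) \<partial>M) = 0"
proof -
  have "(\<integral>\<omega>. F (\<lambda>t. Y t \<omega>) * (\<lambda>x. x (Inr l) - p) (\<lambda>t. Y t \<omega>) \<partial>M) =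
     (\<integral>\<omega>. F (\<lambda>t. Y t \<omega>) \<partial>M) * (\<integral>\<omega>. (\<lambda>x. x (Inr l) - p) (\<lambda>t. Y t \<omega>) \<partial>M)"
    by (rule indep_two[OF indY, where JB="{Inr l}"])
       (use J F res bnd Ip_abs in \<open>auto simp: Inr_II res[unfolded restrict_def] intro!: borel_measurable_diff comp_meas\<close>)
  then show ?thesis by (simp add: E_Ip)
qed

lemma Wx_le_meas: "1 \<le> i \<Longrightarrow> b \<le> k \<Longrightarrow> Wx r i b \<in> borel_measurable (PiM (Jle k) (\<lambda>_. borel))"
  by (rule Wx_meas) (auto intro: in_Jle)
lemma Wx_le_res: "1 \<le> i \<Longrightarrow> b \<le> k \<Longrightarrow> Wx r i b (restrict y (Jle k)) = Wx r i b y"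
  by (rule Wx_restrict) (auto intro: in_Jle)
lemma Wx_Y: "0 \<le> Wx r i b (\<lambda>t. Y t \<omega>) \<and> Wx r i b (\<lambda>t. Y t \<omega>) \<le> 1"
  using Wx_bounds[OF Y_u01] by blast

lemma E_single: "1 \<le> i \<Longrightarrow> (\<integral>\<omega>. Wx r i k (\<lambda>t. Y t \<omega>) * (Y (Inr k) \<omega> - p) \<partial>M) = 0"
proof -
  assume i: "1 \<le> i"
  show ?thesis
  proof (rule zeroI[where J="Jle k"])
    show "Jle k \<subseteq> II" by (rule Jle_sub)
    show "Inr k \<notin> Jle k" by (auto simp: Jle_def)
    show "Wx r i k \<in> borel_measurable (PiM (Jle k) (\<lambda>_. borel))" using i by (simp add: Wx_le_meas)
    show "Wx r i k (restrict y (Jle k)) = Wx r i k y" for y using i by (simp add: Wx_le_res)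
    show "\<bar>Wx r i k (\<lambda>t. Y t \<omega>)\<bar> \<le> 1" for \<omega> using Wx_Y[of i k \<omega>] by auto
  qed
qed

lemma E_off: "1 \<le> i \<Longrightarrow> 1 \<le> j \<Longrightarrow> k \<noteq> l \<Longrightarrow>
  (\<integral>\<omega>. (Wx r i k (\<lambda>t. Y t \<omega>) * Wx r j l (\<lambda>t. Y t \<omega>) * (Y (Inr k) \<omega> - p)) * (Y (Inr l) \<omega> - p) \<partial>M) = 0"
proof -
  assume i: "1 \<le> i" "1 \<le> j" "k \<noteq> l"
  let ?J = "insert (Inr k) (Jle (max k l))"
  let ?F = "\<lambda>x. Wx r i k x * Wx r j l x * (x (Inr k) - p)"
  show ?thesis
  proof (rule zeroI[where J="?J" and F="?F"])
    show "?J \<subseteq> II" using Jle_sub Inr_II by auto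
    show "Inr l \<notin> ?J" using i by (auto simp: Jle_def)
    have m1: "Wx r i k \<in> borel_measurable (PiM ?J (\<lambda>_. borel))"
      by (rule Wx_meas) (use i in \<open>auto intro: in_Jle\<close>)
    have m2: "Wx r j l \<in> borel_measurable (PiM ?J (\<lambda>_. borel))"
      by (rule Wx_meas) (use i in \<open>auto intro: in_Jle\<close>)
    show "?F \<in> borel_measurable (PiM ?J (\<lambda>_. borel))"
      by (intro borel_measurable_times m1 m2 borel_measurable_diff comp_meas) auto
    have r1: "Wx r i k (restrict y ?J) = Wx r i k y" for y
      by (rule Wx_restrict) (use i in \<open>auto intro: in_Jle\<close>)
    have r2: "Wx r j l (restrict y ?J) = Wx r j l y" for y
      by (rule Wx_restrict) (use i in \<open>auto intro: in_Jle\<close>)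
    show "?F (restrict y ?J) = ?F y" for y by (simp add: r1 r2)
    show "\<bar>?F (\<lambda>t. Y t \<omega>)\<bar> \<le> 1" for \<omega>
      using Wx_Y[of i k \<omega>] Wx_Y[of j l \<omega>] Ip_abs[of k \<omega>]
      by (simp add: abs_mult) (intro mult_le_one, auto)
  qed
qed

lemma E_diag: "1 \<le> i \<Longrightarrow> i \<le> j \<Longrightarrow> j \<le> r \<Longrightarrow>
  (\<integral>\<omega>. (Wx r i k (\<lambda>t. Y t \<omega>) * Wx r j k (\<lambda>t. Y t \<omega>)) * (Y (Inr k) \<omega> - p)^2 \<partial>M) = ff i j ^ k * ee i j * (p * (1 - p))"
proof -
  assume i: "1 \<le> i" "i \<le> j" "j \<le> r"
  have "(\<integral>\<omega>. (\<lambda>x. Wx r i k x * Wx r j k x) (\<lambda>t. Y t \<omega>) * (\<lambda>x. (x (Inr k) - p)^2) (\<lambda>t. Y t \<omega>) \<partial>M) =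
     (\<integral>\<omega>. (\<lambda>x. Wx r i k x * Wx r j k x) (\<lambda>t. Y t \<omega>) \<partial>M) * (\<integral>\<omega>. (\<lambda>x. (x (Inr k) - p)^2) (\<lambda>t. Y t \<omega>) \<partial>M)"
  proof (rule indep_two[OF indY, where JA="Jle k" and JB="{Inr k}"])
    show "Jle k \<inter> {Inr k} = {}" by (auto simp: Jle_def)
    show "Jle k \<subseteq> II" by (rule Jle_sub)
    show "{Inr k} \<subseteq> II" by (simp add: Inr_II)
    show "(\<lambda>x. Wx r i k x * Wx r j k x) \<in> borel_measurable (PiM (Jle k) (\<lambda>_. borel))"
      using i by (intro borel_measurable_times Wx_le_meas) auto
    show "(\<lambda>x. (x (Inr k) - p)^2) \<in> borel_measurable (PiM {Inr k} (\<lambda>_. borel))"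
      by (intro borel_measurable_power borel_measurable_diff comp_meas borel_measurable_const) auto
    show "Wx r i k (restrict y (Jle k)) * Wx r j k (restrict y (Jle k)) = Wx r i k y * Wx r j k y" for y
      using i by (simp add: Wx_le_res)
    show "(restrict y {Inr k} (Inr k) - p)^2 = (y (Inr k) - p)^2" for y by simp
    show "\<bar>Wx r i k (\<lambda>t. Y t \<omega>) * Wx r j k (\<lambda>t. Y t \<omega>)\<bar> \<le> 1" for \<omega>
      using Wx_Y[of i k \<omega>] Wx_Y[of j k \<omega>] by (auto intro: mult_le_one)
    show "\<bar>(Y (Inr k) \<omega> - p)^2\<bar> \<le> 1" for \<omega>
      using Ip_abs[of k \<omega>] by (simp add: abs_square_le_1)
  qed
  then show ?thesis using i by (simp add: EWW E_Ip2)
qed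

end

context model begin

definition Gx :: "nat \<Rightarrow> 'a \<Rightarrow> real" where "Gx i \<omega> = (\<Sum>k. Wx r i k (\<lambda>t. Y t \<omega>) * Y (Inr k) \<omega>)"
definition Dx :: "nat \<Rightarrow> 'a \<Rightarrow> real" where "Dx i \<omega> = (\<Sum>k. Wx r i k (\<lambda>t. Y t \<omega>) * (Y (Inr k) \<omega> - p))"
definition Dn :: "nat \<Rightarrow> nat \<Rightarrow> 'a \<Rightarrow> real" where "Dn i n \<omega> = (\<Sum>k<n. Wx r i k (\<lambda>t. Y t \<omega>) * (Y (Inr k) \<omega> - p))"
definition sW :: "nat \<Rightarrow> 'a \<Rightarrow> real" where "sW i \<omega> = (\<Sum>k. Wx r i k (\<lambda>t. Y t \<omega>))"

lemma YI_bounds: "0 \<le> Y (Inr k) \<omega>" "Y (Inr k) \<omega> \<le> 1"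
  using Y_u01[of \<omega>] by (auto simp: u01_def)

lemma partial_W: "(\<Sum>k<n. Wx r i k (\<lambda>t. Y t \<omega>)) \<le> 1"
  using Px_bounds[OF Y_u01, of r i n \<omega>] by (simp add: Wx_partial)

lemma summable_W: "summable (\<lambda>k. Wx r i k (\<lambda>t. Y t \<omega>))"
  by (rule summableI_nonneg_bounded[where x=1]) (use Wx_Y partial_W in auto)

lemma sW_le: "sW i \<omega> \<le> 1"
  unfolding sW_def by (rule suminf_le_const[OF summable_W partial_W])

lemma sW_nonneg: "0 \<le> sW i \<omega>"
  unfolding sW_def by (rule suminf_nonneg[OF summable_W]) (use Wx_Y in auto)

lemma summable_D: "summable (\<lambda>k. Wx r i k (\<lambda>t. Y t \<omega>) * (Y (Inr k) \<omega> - p))"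
  by (rule summable_comparison_test'[OF summable_W, where N=0])
     (use Wx_Y Ip_abs in \<open>auto simp: abs_mult intro: mult_le_one mult_right_le_one_le\<close>)

lemma summable_G: "summable (\<lambda>k. Wx r i k (\<lambda>t. Y t \<omega>) * Y (Inr k) \<omega>)"
  by (rule summable_comparison_test'[OF summable_W, where N=0])
     (use Wx_Y YI_bounds in \<open>auto simp: abs_mult intro: mult_right_le_one_le\<close>)

lemma Gx_eq: "Gx i \<omega> = p * sW i \<omega> + Dx i \<omega>"
proof -
  have "(\<lambda>k. Wx r i k (\<lambda>t. Y t \<omega>) * Y (Inr k) \<omega>) = (\<lambda>k. p * Wx r i k (\<lambda>t. Y t \<omega>) + Wx r i k (\<lambda>t. Y t \<omega>) * (Y (Inr k) \<omega> - p))"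
    by (auto simp: fun_eq_iff algebra_simps)
  then show ?thesis unfolding Gx_def Dx_def sW_def
    using suminf_add[OF summable_mult[OF summable_W, of p] summable_D, of i \<omega>] suminf_mult[OF summable_W, of p i \<omega>]
    by simp
qed

lemma Dn_abs: "\<bar>Dn i n \<omega>\<bar> \<le> 1"
proof -
  have "\<bar>Dn i n \<omega>\<bar> \<le> (\<Sum>k<n. \<bar>Wx r i k (\<lambda>t. Y t \<omega>) * (Y (Inr k) \<omega> - p)\<bar>)"
    unfolding Dn_def by (rule sum_abs)
  also have "\<dots> \<le> (\<Sum>k<n. Wx r i k (\<lambda>t. Y t \<omega>))"
    using Wx_Y Ip_abs by (intro sum_mono) (auto simp: abs_mult intro: mult_right_le_one_le)
  also have "\<dots> \<le> 1" by (rule partial_W)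
  finally show ?thesis .
qed

lemma Dn_lim: "(\<lambda>n. Dn i n \<omega>) \<longlonglongrightarrow> Dx i \<omega>"
  unfolding Dn_def Dx_def by (rule summable_LIMSEQ[OF summable_D])

lemma Dx_abs: "\<bar>Dx i \<omega>\<bar> \<le> 1"
  by (rule LIMSEQ_le_const2[OF tendsto_rabs[OF Dn_lim]]) (use Dn_abs in auto)

lemma W_meas: "1 \<le> i \<Longrightarrow> (\<lambda>\<omega>. Wx r i k (\<lambda>t. Y t \<omega>)) \<in> borel_measurable M"
  by (rule meas_F[OF subset_refl Wx_meas Wx_restrict]) (auto intro: in_II)

lemma YI_meas: "Y (Inr k) \<in> borel_measurable M"
  by (rule Y_meas[OF Inr_II])

lemma Dn_meas: "1 \<le> i \<Longrightarrow> Dn i n \<in> borel_measurable M"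
  unfolding Dn_def[abs_def]
  by (intro borel_measurable_sum borel_measurable_times borel_measurable_diff W_meas YI_meas borel_measurable_const)

lemma Dx_meas: "1 \<le> i \<Longrightarrow> Dx i \<in> borel_measurable M"
  unfolding Dx_def[abs_def]
  by (intro borel_measurable_suminf borel_measurable_times borel_measurable_diff W_meas YI_meas borel_measurable_const)

lemma sW_meas: "1 \<le> i \<Longrightarrow> sW i \<in> borel_measurable M"
  unfolding sW_def[abs_def]
  by (intro borel_measurable_suminf W_meas)

lemma Gx_meas: "1 \<le> i \<Longrightarrow> Gx i \<in> borel_measurable M"
  unfolding Gx_def[abs_def]
  by (intro borel_measurable_suminf borel_measurable_times W_meas YI_meas)

lemma intB: "(f::'a \<Rightarrow> real) \<in> borel_measurable M \<Longrightarrow> (\<And>\<omega>. \<bar>f \<omega>\<bar> \<le> 1) \<Longrightarrow> integrable M f"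
  by (rule integrable_const_bound[where B=1]) auto

lemma sW_AE: "1 \<le> i \<Longrightarrow> i \<le> r \<Longrightarrow> AE \<omega> in M. sW i \<omega> = 1"
proof -
  assume i: "1 \<le> i" "i \<le> r"
  define q where "q = 1 - 1 / (1 + dd i)"
  have q: "0 \<le> q" "q < 1" using dd_pos[OF i] by (auto simp: q_def)
  have Pm: "(\<lambda>\<omega>. Px r i n (\<lambda>t. Y t \<omega>)) \<in> borel_measurable M" for n
    by (rule meas_F[OF subset_refl Px_meas Px_restrict]) (use i in \<open>auto intro: in_II\<close>)
  have Pi: "integrable M (\<lambda>\<omega>. Px r i n (\<lambda>t. Y t \<omega>))" for n
    by (rule intB[OF Pm]) (use Px_bounds[OF Y_u01] in \<open>auto simp: abs_le_iff\<close>)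
  have E: "(\<integral>\<omega>. (\<Sum>k<n. Wx r i k (\<lambda>t. Y t \<omega>)) \<partial>M) = 1 - q ^ n" for n
    using i by (simp add: Wx_partial integral_diff Pi EP prob_space q_def)
  have "(\<lambda>n. \<integral>\<omega>. (\<Sum>k<n. Wx r i k (\<lambda>t. Y t \<omega>)) \<partial>M) \<longlonglongrightarrow> (\<integral>\<omega>. sW i \<omega> \<partial>M)"
  proof (rule integral_dominated_convergence[where w="\<lambda>_. 1"])
    show "sW i \<in> borel_measurable M" using i(1) by (rule sW_meas)
    show "(\<lambda>\<omega>. \<Sum>k<n. Wx r i k (\<lambda>t. Y t \<omega>)) \<in> borel_measurable M" for n
      using i by (intro borel_measurable_sum W_meas)
    show "integrable M (\<lambda>_. 1::real)" by simp
    show "AE \<omega> in M. (\<lambda>n. \<Sum>k<n. Wx r i k (\<lambda>t. Y t \<omega>)) \<longlonglongrightarrow> sW i \<omega>"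
      unfolding sW_def by (intro AE_I2 summable_LIMSEQ[OF summable_W])
    show "AE \<omega> in M. norm (\<Sum>k<n. Wx r i k (\<lambda>t. Y t \<omega>)) \<le> 1" for n
    proof (intro AE_I2)
      fix \<omega>
      have "0 \<le> (\<Sum>k<n. Wx r i k (\<lambda>t. Y t \<omega>))" by (intro sum_nonneg) (use Wx_Y in auto)
      with partial_W[where n=n and i=i and \<omega>=\<omega>] show "norm (\<Sum>k<n. Wx r i k (\<lambda>t. Y t \<omega>)) \<le> 1" by simp
    qed
  qed
  moreover have "(\<lambda>n. 1 - q ^ n) \<longlonglongrightarrow> 1"
    using q by (intro tendsto_eq_intros LIMSEQ_power_zero) auto
  ultimately have "(\<integral>\<omega>. sW i \<omega> \<partial>M) = 1"
    unfolding E by (rule LIMSEQ_unique)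
  moreover have intsW: "integrable M (sW i)"
    by (rule intB) (use i sW_le sW_nonneg in \<open>auto intro: sW_meas simp: abs_le_iff\<close>)
  ultimately have "(\<integral>\<omega>. 1 - sW i \<omega> \<partial>M) = 0"
    by (simp add: integral_diff prob_space)
  moreover have "integrable M (\<lambda>\<omega>. 1 - sW i \<omega>)"
    by (rule intB) (use i sW_le sW_nonneg in \<open>auto intro!: borel_measurable_diff sW_meas simp: abs_le_iff\<close>)
  ultimately have "AE \<omega> in M. 1 - sW i \<omega> = 0"
    using integral_nonneg_eq_0_iff_AE[where f="\<lambda>\<omega>. 1 - sW i \<omega>"] sW_le by auto
  then show ?thesis by auto
qed

end


lemma cf_gen:
  fixes u v w :: real assumes "u > 0" "v > 0" "w > 0" and N: "u * w + v * w - 2 * u \<noteq> 0"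
  shows "(2 / (v * w)) / (1 - (1 - 1/v - 1/u + 2/(v * w))) = 2 * u / (u * w + v * w - 2 * u)"
proof -
  have "1 - (1 - 1/v - 1/u + 2/(v * w)) = (u * w + v * w - 2 * u) / (u * v * w)"
    using assms by (simp add: field_simps)
  then show ?thesis using assms by (simp add: field_simps)
qed

lemma closed_form:
  fixes c d :: real assumes c: "c > 0" and d: "d > 0"
  shows "(2 / ((1+d)*(2+c))) / (1 - (1 - 1/(1+d) - 1/(1+c) + 2/((1+d)*(2+c)))) = 2*(1+c) / (2*(1+c)^2 + (2+c)*(d-c))"
proof -
  have den: "2*(1+c)^2 + (2+c)*(d-c) = (1+c)*(2+c) + (1+d)*(2+c) - 2*(1+c)" by (simp add: power2_eq_square algebra_simps)
  have dpos: "(1+c)*(2+c) + (1+d)*(2+c) - 2*(1+c) > 0"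
  proof -
    have "(1+c)*(2+c) + (1+d)*(2+c) - 2*(1+c) = (1+c)*c + (1+d)*(2+c)" by (simp add: algebra_simps)
    also have "\<dots> > 0" using c d by (intro add_pos_pos mult_pos_pos) auto
    finally show ?thesis .
  qed
  show ?thesis unfolding den
    by (rule cf_gen) (use c d dpos in auto)
qed

lemma powr32: "(x::real) > 0 \<Longrightarrow> x powr (3/2) = x * sqrt x"
proof -
  assume x: "x > 0"
  have "x powr (3/2) = x powr (1 + 1/2)" by simp
  also have "\<dots> = x * x powr (1/2)" using x by (simp only: powr_add) simp
  finally show ?thesis using x by (simp add: powr_half_sqrt)
qed

context model begin

lemma term_int: "1 \<le> i \<Longrightarrow> integrable M (\<lambda>\<omega>. Wx r i k (\<lambda>t. Y t \<omega>) * (Y (Inr k) \<omega> - p))"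
  by (rule intB) (use Wx_Y Ip_abs in \<open>auto simp: abs_mult intro!: borel_measurable_times borel_measurable_diff W_meas YI_meas intro: mult_le_one\<close>)

lemma EDn: "1 \<le> i \<Longrightarrow> (\<integral>\<omega>. Dn i n \<omega> \<partial>M) = 0"
  unfolding Dn_def by (simp add: integral_sum term_int E_single)

lemma EDx: "1 \<le> i \<Longrightarrow> (\<integral>\<omega>. Dx i \<omega> \<partial>M) = 0"
proof -
  assume i: "1 \<le> i"
  have "(\<lambda>n. \<integral>\<omega>. Dn i n \<omega> \<partial>M) \<longlonglongrightarrow> (\<integral>\<omega>. Dx i \<omega> \<partial>M)"
    by (rule integral_dominated_convergence[where w="\<lambda>_. 1"])
       (use i Dn_abs in \<open>auto intro: Dx_meas Dn_meas Dn_lim\<close>)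
  then show ?thesis using i by (simp add: EDn LIMSEQ_const_iff)
qed

lemma ff_bounds: "1 \<le> i \<Longrightarrow> i \<le> j \<Longrightarrow> j \<le> r \<Longrightarrow> 0 \<le> ff i j \<and> ff i j < 1"
proof -
  assume i: "1 \<le> i" "i \<le> j" "j \<le> r"
  have "0 \<le> (\<integral>\<omega>. (1 - Sx r i 0 (\<lambda>t. Y t \<omega>)) * (1 - Sx r j 0 (\<lambda>t. Y t \<omega>)) \<partial>M)"
    using Sx_Y[of i 0] Sx_Y[of j 0] by (intro integral_nonneg_AE AE_I2) auto
  then have nn: "0 \<le> ff i j" using ES1S[OF i] by simp
  have c: "dd j > 0" "dd i > 0" using dd_pos i by auto
  have "2 / ((1 + dd i) * (2 + dd j)) = (1 / (1 + dd i)) * (2 / (2 + dd j))" by simp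
  also have "\<dots> \<le> (1 / (1 + dd i)) * 1" using c by (intro mult_left_mono) auto
  finally have "2 / ((1 + dd i) * (2 + dd j)) \<le> 1 / (1 + dd i)" by simp
  moreover have "1 / (1 + dd j) > 0" using c by simp
  ultimately have "ff i j < 1" unfolding ff_def ee_def by linarith
  with nn show ?thesis by simp
qed

lemma EDD: "1 \<le> i \<Longrightarrow> i \<le> j \<Longrightarrow> j \<le> r \<Longrightarrow>
  (\<integral>\<omega>. Dx i \<omega> * Dx j \<omega> \<partial>M) = p * (1 - p) * (ee i j / (1 - ff i j))"
proof -
  assume i: "1 \<le> i" "i \<le> j" "j \<le> r"
  let ?a = "\<lambda>i k \<omega>. Wx r i k (\<lambda>t. Y t \<omega>) * (Y (Inr k) \<omega> - p)"
  have aabs: "\<bar>?a i' k \<omega>\<bar> \<le> 1" for i' k \<omega>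
    using Wx_Y[of i' k \<omega>] Ip_abs[of k \<omega>] by (auto simp: abs_mult intro: mult_le_one)
  have tt: "integrable M (\<lambda>\<omega>. ?a i k \<omega> * ?a j l \<omega>)" for k l
  proof (rule intB)
    show "(\<lambda>\<omega>. ?a i k \<omega> * ?a j l \<omega>) \<in> borel_measurable M"
      using i by (intro borel_measurable_times borel_measurable_diff W_meas YI_meas borel_measurable_const) auto
    show "\<bar>?a i k \<omega> * ?a j l \<omega>\<bar> \<le> 1" for \<omega>
      using aabs[of i k \<omega>] aabs[of j l \<omega>] by (simp only: abs_mult) (rule mult_le_one, auto)
  qed
  have trm: "(\<integral>\<omega>. ?a i k \<omega> * ?a j l \<omega> \<partial>M) = (if l = k then ff i j ^ k * ee i j * (p * (1 - p)) else 0)" for k l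
  proof (cases "l = k")
    case True
    have "(\<lambda>\<omega>. ?a i k \<omega> * ?a j l \<omega>) = (\<lambda>\<omega>. (Wx r i k (\<lambda>t. Y t \<omega>) * Wx r j k (\<lambda>t. Y t \<omega>)) * (Y (Inr k) \<omega> - p)^2)"
      using True by (simp add: fun_eq_iff power2_eq_square mult_ac)
    then show ?thesis using True E_diag[OF i] by simp
  next
    case False
    have "(\<lambda>\<omega>. ?a i k \<omega> * ?a j l \<omega>) = (\<lambda>\<omega>. (Wx r i k (\<lambda>t. Y t \<omega>) * Wx r j l (\<lambda>t. Y t \<omega>) * (Y (Inr k) \<omega> - p)) * (Y (Inr l) \<omega> - p))"
      by (simp add: fun_eq_iff mult_ac)
    then show ?thesis using False E_off[of i j k l] i by simp
  qed
  have En: "(\<integral>\<omega>. Dn i n \<omega> * Dn j n \<omega> \<partial>M) = (\<Sum>k<n. ff i j ^ k * (ee i j * (p * (1 - p))))" for n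
  proof -
    have "(\<integral>\<omega>. Dn i n \<omega> * Dn j n \<omega> \<partial>M) = (\<integral>\<omega>. (\<Sum>k<n. \<Sum>l<n. ?a i k \<omega> * ?a j l \<omega>) \<partial>M)"
      unfolding Dn_def by (simp add: sum_product)
    also have "\<dots> = (\<Sum>k<n. \<Sum>l<n. \<integral>\<omega>. ?a i k \<omega> * ?a j l \<omega> \<partial>M)"
      by (simp add: integral_sum tt)
    also have "\<dots> = (\<Sum>k<n. ff i j ^ k * (ee i j * (p * (1 - p))))"
      by (simp add: trm, simp add: mult.assoc)
    finally show ?thesis .
  qed
  have "(\<lambda>n. \<integral>\<omega>. Dn i n \<omega> * Dn j n \<omega> \<partial>M) \<longlonglongrightarrow> (\<integral>\<omega>. Dx i \<omega> * Dx j \<omega> \<partial>M)"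
  proof (rule integral_dominated_convergence[where w="\<lambda>_. 1"])
    show "(\<lambda>\<omega>. Dx i \<omega> * Dx j \<omega>) \<in> borel_measurable M" using i by (intro borel_measurable_times Dx_meas) auto
    show "(\<lambda>\<omega>. Dn i n \<omega> * Dn j n \<omega>) \<in> borel_measurable M" for n using i by (intro borel_measurable_times Dn_meas) auto
    show "AE \<omega> in M. (\<lambda>n. Dn i n \<omega> * Dn j n \<omega>) \<longlonglongrightarrow> Dx i \<omega> * Dx j \<omega>"
      by (intro AE_I2 tendsto_mult Dn_lim)
    show "AE \<omega> in M. norm (Dn i n \<omega> * Dn j n \<omega>) \<le> 1" for n
      using Dn_abs by (intro AE_I2) (auto simp: abs_mult intro: mult_le_one)
  qed simp
  moreover have "(\<lambda>n. \<Sum>k<n. ff i j ^ k * (ee i j * (p * (1 - p)))) \<longlonglongrightarrow> 1 / (1 - ff i j) * (ee i j * (p * (1 - p)))"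
  proof -
    have g: "(\<lambda>n. ff i j ^ n) sums (1 / (1 - ff i j))"
      by (rule geometric_sums) (use ff_bounds[OF i] in auto)
    from sums_mult2[OF g, of "ee i j * (p * (1 - p))"] show ?thesis by (simp add: sums_def)
  qed
  ultimately have "(\<integral>\<omega>. Dx i \<omega> * Dx j \<omega> \<partial>M) = 1 / (1 - ff i j) * (ee i j * (p * (1 - p)))"
    unfolding En using LIMSEQ_unique by blast
  then show ?thesis by simp
qed

end


lemma final_alg:
  fixes q c d den :: real assumes q: "q > 0" and c: "c > 0" and d: "d > 0"
  shows "(q * (2 * (1 + c) / den)) / sqrt ((q * (1 / (1 + d))) * (q * (1 / (1 + c))))
       = 2 * sqrt (1 + d) * (1 + c) powr (3/2) / den"
proof -
  have s: "sqrt ((q * (1 / (1 + d))) * (q * (1 / (1 + c)))) = q / (sqrt (1 + d) * sqrt (1 + c))"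
  proof -
    have "(q * (1 / (1 + d))) * (q * (1 / (1 + c))) = q^2 / ((1 + d) * (1 + c))" by (simp add: power2_eq_square)
    then show ?thesis using q c d by (simp add: real_sqrt_divide real_sqrt_mult)
  qed
  have p: "(1 + c) powr (3/2) = (1 + c) * sqrt (1 + c)" using c by (intro powr32) auto
  have "sqrt (1 + d) > 0" "sqrt (1 + c) > 0" using c d by auto
  then show ?thesis unfolding s p using q by (cases "den = 0") (auto simp: field_simps)
qed

lemma correlation_cong_AE:
  assumes "X \<in> borel_measurable M" "X' \<in> borel_measurable M" "Y \<in> borel_measurable M" "Y' \<in> borel_measurable M"
    and XX: "AE \<omega> in M. X \<omega> = X' \<omega>" and YY: "AE \<omega> in M. Y \<omega> = Y' \<omega>"
  shows "correlation M X Y = correlation M X' Y'"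
proof -
  have 1: "(\<integral>\<omega>. X \<omega> \<partial>M) = (\<integral>\<omega>. X' \<omega> \<partial>M)" by (rule integral_cong_AE) (use assms in auto)
  have 2: "(\<integral>\<omega>. Y \<omega> \<partial>M) = (\<integral>\<omega>. Y' \<omega> \<partial>M)" by (rule integral_cong_AE) (use assms in auto)
  have 3: "(\<integral>\<omega>. (X \<omega> - (\<integral>\<omega>'. X \<omega>' \<partial>M)) * (Y \<omega> - (\<integral>\<omega>'. Y \<omega>' \<partial>M)) \<partial>M)
    = (\<integral>\<omega>. (X' \<omega> - (\<integral>\<omega>'. X' \<omega>' \<partial>M)) * (Y' \<omega> - (\<integral>\<omega>'. Y' \<omega>' \<partial>M)) \<partial>M)"
    unfolding 1 2 by (rule integral_cong_AE) (use assms in auto)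
  have 4: "(\<integral>\<omega>. (X \<omega> - (\<integral>\<omega>'. X \<omega>' \<partial>M))\<^sup>2 \<partial>M) = (\<integral>\<omega>. (X' \<omega> - (\<integral>\<omega>'. X' \<omega>' \<partial>M))\<^sup>2 \<partial>M)"
    unfolding 1 by (rule integral_cong_AE) (use assms in auto)
  have 5: "(\<integral>\<omega>. (Y \<omega> - (\<integral>\<omega>'. Y \<omega>' \<partial>M))\<^sup>2 \<partial>M) = (\<integral>\<omega>. (Y' \<omega> - (\<integral>\<omega>'. Y' \<omega>' \<partial>M))\<^sup>2 \<partial>M)"
    unfolding 2 by (rule integral_cong_AE) (use assms in auto)
  show ?thesis unfolding correlation_def 3 4 5 ..
qed

context model begin

lemma Gx_AE: "1 \<le> i \<Longrightarrow> i \<le> r \<Longrightarrow> AE \<omega> in M. Gx i \<omega> = p + Dx i \<omega>"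
proof -
  assume i: "1 \<le> i" "i \<le> r"
  from sW_AE[OF i] show ?thesis by eventually_elim (simp add: Gx_eq)
qed

lemma Dx_int: "1 \<le> i \<Longrightarrow> integrable M (Dx i)"
  by (rule intB[OF Dx_meas Dx_abs])

lemma EGx: "1 \<le> i \<Longrightarrow> i \<le> r \<Longrightarrow> (\<integral>\<omega>. Gx i \<omega> \<partial>M) = p"
proof -
  assume i: "1 \<le> i" "i \<le> r"
  have "(\<integral>\<omega>. Gx i \<omega> \<partial>M) = (\<integral>\<omega>. p + Dx i \<omega> \<partial>M)"
    by (rule integral_cong_AE) (use i Gx_AE[OF i] in \<open>auto intro!: Gx_meas Dx_meas borel_measurable_add borel_measurable_const\<close>)
  also have "\<dots> = p" using i by (simp add: integral_add Dx_int EDx prob_space)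
  finally show ?thesis .
qed

lemma cov: "1 \<le> i \<Longrightarrow> i \<le> j \<Longrightarrow> j \<le> r \<Longrightarrow>
  (\<integral>\<omega>. (Gx i \<omega> - (\<integral>\<omega>'. Gx i \<omega>' \<partial>M)) * (Gx j \<omega> - (\<integral>\<omega>'. Gx j \<omega>' \<partial>M)) \<partial>M) = p * (1 - p) * (ee i j / (1 - ff i j))"
proof -
  assume i: "1 \<le> i" "i \<le> j" "j \<le> r"
  have "(\<integral>\<omega>. (Gx i \<omega> - (\<integral>\<omega>'. Gx i \<omega>' \<partial>M)) * (Gx j \<omega> - (\<integral>\<omega>'. Gx j \<omega>' \<partial>M)) \<partial>M)
     = (\<integral>\<omega>. Dx i \<omega> * Dx j \<omega> \<partial>M)"
  proof (rule integral_cong_AE)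
    show "(\<lambda>\<omega>. (Gx i \<omega> - (\<integral>\<omega>'. Gx i \<omega>' \<partial>M)) * (Gx j \<omega> - (\<integral>\<omega>'. Gx j \<omega>' \<partial>M))) \<in> borel_measurable M"
      using i by (intro borel_measurable_times borel_measurable_diff Gx_meas borel_measurable_const) auto
    show "(\<lambda>\<omega>. Dx i \<omega> * Dx j \<omega>) \<in> borel_measurable M"
      using i by (intro borel_measurable_times Dx_meas) auto
    show "AE \<omega> in M. (Gx i \<omega> - (\<integral>\<omega>'. Gx i \<omega>' \<partial>M)) * (Gx j \<omega> - (\<integral>\<omega>'. Gx j \<omega>' \<partial>M)) = Dx i \<omega> * Dx j \<omega>"
    proof -
      have a: "AE \<omega> in M. Gx i \<omega> = p + Dx i \<omega>" using i by (intro Gx_AE) auto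
      have b: "AE \<omega> in M. Gx j \<omega> = p + Dx j \<omega>" using i by (intro Gx_AE) auto
      have e: "(\<integral>\<omega>'. Gx i \<omega>' \<partial>M) = p" "(\<integral>\<omega>'. Gx j \<omega>' \<partial>M) = p" using i by (auto intro: EGx)
      from a b show ?thesis by eventually_elim (simp add: e)
    qed
  qed
  then show ?thesis using EDD[OF i] by simp
qed

lemma T_ij: "1 \<le> i \<Longrightarrow> i \<le> j \<Longrightarrow> j \<le> r \<Longrightarrow>
   ee i j / (1 - ff i j) = 2 * (1 + dd j) / (2 * (1 + dd j)^2 + (2 + dd j) * (dd i - dd j))"
  unfolding ee_def ff_def by (rule closed_form) (auto intro: dd_pos)

lemma T_ii: "1 \<le> i \<Longrightarrow> i \<le> r \<Longrightarrow> ee i i / (1 - ff i i) = 1 / (1 + dd i)"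
proof -
  assume i: "1 \<le> i" "i \<le> r"
  have "ee i i / (1 - ff i i) = 2 * (1 + dd i) / (2 * (1 + dd i)^2 + (2 + dd i) * (dd i - dd i))"
    using i by (intro T_ij) auto
  also have "\<dots> = 2 * (1 + dd i) / (2 * ((1 + dd i) * (1 + dd i)))" by (simp add: power2_eq_square)
  also have "\<dots> = 1 / (1 + dd i)"
  proof -
    have nz: "2 * (1 + dd i) \<noteq> 0" using dd_pos[OF i] by simp
    have "2 * (1 + dd i) / (2 * ((1 + dd i) * (1 + dd i))) = (2 * (1 + dd i)) / ((2 * (1 + dd i)) * (1 + dd i))"
      by (simp only: mult.assoc)
    also have "\<dots> = 1 / (1 + dd i)" by (rule nonzero_divide_mult_cancel_left[OF nz])
    finally show ?thesis .
  qed
  finally show ?thesis .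
qed

lemma corr_Gx:
  assumes i: "1 \<le> i" "i < j" "j \<le> r" and p: "0 < p" "p < 1"
  shows "correlation M (Gx i) (Gx j) =
     2 * sqrt (1 + dd i) * (1 + dd j) powr (3/2) / (2 * (1 + dd j)^2 + (2 + dd j) * (dd i - dd j))"
proof -
  have "correlation M (Gx i) (Gx j) = (p * (1 - p) * (ee i j / (1 - ff i j))) /
     sqrt ((p * (1 - p) * (ee i i / (1 - ff i i))) * (p * (1 - p) * (ee j j / (1 - ff j j))))"
    unfolding correlation_def using i
    by (simp only: cov power2_eq_square)
  also have "\<dots> = 2 * sqrt (1 + dd i) * (1 + dd j) powr (3/2) / (2 * (1 + dd j)^2 + (2 + dd j) * (dd i - dd j))"
  proof -
    have tij: "ee i j / (1 - ff i j) = 2 * (1 + dd j) / (2 * (1 + dd j)^2 + (2 + dd j) * (dd i - dd j))"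
      using i by (intro T_ij) auto
    have tii: "ee i i / (1 - ff i i) = 1 / (1 + dd i)" using i by (intro T_ii) auto
    have tjj: "ee j j / (1 - ff j j) = 1 / (1 + dd j)" using i by (intro T_ii) auto
    show ?thesis unfolding tij tii tjj by (rule final_alg) (use p dd_pos i in auto)
  qed
  finally show ?thesis .
qed

end


theorem mainTheorem6:
  fixes M :: "'a measure"
    and H0 :: "'b::polish_space measure"
    and r :: nat
    and \<alpha> :: "nat \<Rightarrow> real"
    and V :: "nat \<Rightarrow> nat \<Rightarrow> 'a \<Rightarrow> real"
    and \<phi> :: "nat \<Rightarrow> 'a \<Rightarrow> 'b"
    and i j :: nat
    and A :: "'b set"
  assumes "prob_space M"
    and "r \<ge> 2"
    and \<alpha>_pos: "\<And>l. l \<in> {1..r} \<Longrightarrow> \<alpha> l > 0"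
    and H0: "prob_space H0" "sets H0 = sets borel"
    and V_meas: "\<And>m k. m < r \<Longrightarrow> V m k \<in> borel_measurable M"
    and V_beta: "\<And>m k. m < r \<Longrightarrow>
        distributed M lborel (V m k)
          (\<lambda>x. ennreal (beta_density (1 + (\<Sum>l=1..m. \<alpha> l)) (\<alpha> (m + 1)) x))"
    and \<phi>_meas: "\<And>k. \<phi> k \<in> measurable M H0"
    and \<phi>_law: "\<And>k. distr M H0 (\<phi> k) = H0"
    and indep: "prob_space.indep_sets M
        (case_sum
           (\<lambda>(m, k). sigma_sets (space M) {V m k -` B \<inter> space M | B. B \<in> sets borel})
           (\<lambda>k. sigma_sets (space M) {\<phi> k -` B \<inter> space M | B. B \<in> sets H0}))
        (({..<r} \<times> UNIV) <+> UNIV)"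
    and ij: "1 \<le> i" "i < j" "j \<le> r"
    and A: "A \<in> sets H0" "0 < measure H0 A" "measure H0 A < 1"
  shows "correlation M (G_meas r V \<phi> i A) (G_meas r V \<phi> j A) =
     2 * sqrt (1 + (\<Sum>l=1..r-i+1. \<alpha> l)) * (1 + (\<Sum>l=1..r-j+1. \<alpha> l)) powr (3/2)
     / (2 * (1 + (\<Sum>l=1..r-j+1. \<alpha> l))\<^sup>2
        + (2 + (\<Sum>l=1..r-j+1. \<alpha> l)) * (\<Sum>l=r-j+2..r-i+1. \<alpha> l))"
proof -
  interpret model M H0 r \<alpha> V \<phi> A
    by (intro model.intro model_axioms.intro) (use assms in auto)
  have pp: "0 < p" "p < 1" using assms(15,16) by (simp_all add: p_def)
  have AEV: "AE \<omega> in M. \<forall>mk::nat\<times>nat. fst mk < r \<longrightarrow> 0 < V (fst mk) (snd mk) \<omega> \<and> V (fst mk) (snd mk) \<omega> < 1"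
  proof (subst AE_all_countable, intro allI)
    fix mk :: "nat \<times> nat"
    obtain m k where mk: "mk = (m, k)" by force
    show "AE \<omega> in M. fst mk < r \<longrightarrow> 0 < V (fst mk) (snd mk) \<omega> \<and> V (fst mk) (snd mk) \<omega> < 1"
    proof (cases "m < r")
      case True
      have a: "0 < 1 + (\<Sum>l=1..m. \<alpha> l)"
      proof -
        have "0 \<le> (\<Sum>l=1..m. \<alpha> l)" using \<alpha>_pos True by (intro sum_nonneg) (auto simp: less_imp_le)
        then show ?thesis by simp
      qed
      have b: "0 < \<alpha> (m + 1)" using \<alpha>_pos True by auto
      from beta_AE[OF a b V_beta[OF True, of k]] show ?thesis
        by eventually_elim (simp add: mk)
    next
      case False
      then show ?thesis by (simp add: mk)
    qed
  qed
  have Seq: "stick_S r V i' k \<omega> = Sx r i' k (\<lambda>t. Y t \<omega>)"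
    if "1 \<le> i'" "\<forall>mk::nat\<times>nat. fst mk < r \<longrightarrow> 0 < V (fst mk) (snd mk) \<omega> \<and> V (fst mk) (snd mk) \<omega> < 1" for i' k \<omega>
    unfolding stick_S_def Sx_def
  proof (intro prod.cong refl)
    fix m assume "m \<in> {0..r - i'}"
    then have "m < r" using that(1) r2 by auto
    then have "0 < V m k \<omega> \<and> V m k \<omega> < 1" using that(2)[rule_format, of "(m,k)"] by simp
    then show "V m k \<omega> = Y (Inl (m, k)) \<omega>" by (simp add: Y_def Vc_def clamp_def)
  qed
  have Geq: "AE \<omega> in M. G_meas r V \<phi> i' A \<omega> = Gx i' \<omega>" if "1 \<le> i'" for i'
    using AEV
  proof eventually_elim
    case (elim \<omega>)
    have "stick_W r V i' k \<omega> * indicator A (\<phi> k \<omega>) = Wx r i' k (\<lambda>t. Y t \<omega>) * Y (Inr k) \<omega>" for k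
      using Seq[OF that elim] by (simp add: stick_W_def Wx_def Px_def Y_def)
    then show ?case by (simp add: G_meas_def Gx_def)
  qed
  have Gm: "G_meas r V \<phi> i' A \<in> borel_measurable M" if "1 \<le> i'" for i'
  proof -
    have "(\<lambda>\<omega>. stick_S r V i' k \<omega>) \<in> borel_measurable M" for k
      unfolding stick_S_def using that r2 by (intro borel_measurable_prod V_meas) auto
    then have "(\<lambda>\<omega>. stick_W r V i' k \<omega>) \<in> borel_measurable M" for k
      unfolding stick_W_def by (intro borel_measurable_times borel_measurable_prod borel_measurable_diff borel_measurable_const) auto
    then show ?thesis unfolding G_meas_def[abs_def]
      by (intro borel_measurable_suminf borel_measurable_times measurable_compose[OF \<phi>_meas borel_measurable_indicator[OF A]])
  qed
  have "correlation M (G_meas r V \<phi> i A) (G_meas r V \<phi> j A) = correlation M (Gx i) (Gx j)"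
    by (rule correlation_cong_AE) (use ij in \<open>auto intro: Gm Gx_meas Geq\<close>)
  also have "\<dots> = 2 * sqrt (1 + dd i) * (1 + dd j) powr (3/2) / (2 * (1 + dd j)^2 + (2 + dd j) * (dd i - dd j))"
    by (rule corr_Gx) (use ij pp in auto)
  also have "dd i = (\<Sum>l=1..r-i+1. \<alpha> l)" by (simp add: dd_def Asum_def)
  also have "dd j = (\<Sum>l=1..r-j+1. \<alpha> l)" by (simp add: dd_def Asum_def)
  also have "(\<Sum>l=1..r-i+1. \<alpha> l) - (\<Sum>l=1..r-j+1. \<alpha> l) = (\<Sum>l=r-j+2..r-i+1. \<alpha> l)"
  proof -
    have "{1..r-i+1} = {1..r-j+1} \<union> {r-j+2..r-i+1}" using ij by auto
    moreover have "{1..r-j+1} \<inter> {r-j+2..r-i+1} = {}" by auto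
    ultimately have "(\<Sum>l=1..r-i+1. \<alpha> l) = (\<Sum>l=1..r-j+1. \<alpha> l) + (\<Sum>l=r-j+2..r-i+1. \<alpha> l)"
      by (simp add: sum.union_disjoint)
    then show ?thesis by simp
  qed
  finally show ?thesis .
qed


end
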